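(* Let $d\ge1$, $m\ge1$, $\nu\ge2$ be integers, $\Lambda\subset\mathbb Z^d$ finite, containing $\mathbf 0$ and symmetric, $\boldsymbol\Sigma=\{\Sigma_{\mathbf k}\}_{\mathbf k\in\Lambda}$ with $\Sigma_{-\mathbf k}=\Sigma_{\mathbf k}^*\in\mathbb C^{m\times m}$, and $\Psi$ an $m\times m$ matrix-valued function on $\mathbb T^d$ with rational entries which is bounded and coercive. Assume the Feasibility Assumption, and let $\mathbf Q^\circ\in\partial\mathscr L_+$ be the unique minimizer of $J_\nu$ over $\mathscr L_+$. Let $K(\mathbf Q^\circ)=\{\boldsymbol\Sigma_K:\ \langle\boldsymbol\Sigma_K,\mathbf Q-\mathbf Q^\circ\rangle\le0\text{ for all }\mathbf Q\in\mathscr L_+\}$. If $\boldsymbol\Sigma_K\in K(\mathbf Q^\circ)$, then $-\boldsymbol\Sigma_K\in\overline{\mathfrak C}_+$, the closure of $$\mathfrak C_+=\{\boldsymbol\Sigma:\ \langle\boldsymbol\Sigma,\mathbf Q\rangle>0\text{ for all }\mathbf Q\neq0\text{ such that }Q(e^{i\boldsymbol\theta})\ge0\ \forall\boldsymbol\theta\in\mathbb T^d\}.$$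
   Context: $\mathbb T^d=(-\pi,\pi]^d$, $\mathrm d\mu=(2\pi)^{-d}\prod_j\mathrm d\theta_j$; bounded and coercive means $aI_m\le\Psi\le bI_m$ on $\mathbb T^d$ for some $b>a>0$. All $\mathbf Q$ and $\boldsymbol\Sigma$'s are families $\{Q_{\mathbf k}\}_{\mathbf k\in\Lambda}$ of $m\times m$ complex matrices with $Q_{-\mathbf k}=Q_{\mathbf k}^*$; $Q(e^{i\boldsymbol\theta})=\sum_{\mathbf k}Q_{\mathbf k}e^{-i\langle\mathbf k,\boldsymbol\theta\rangle}$, $\langle\mathbf k,\boldsymbol\theta\rangle=\sum_jk_j\theta_j$, and $\langle\mathbf Q,\boldsymbol\Sigma\rangle=\sum_{\mathbf k}\operatorname{tr}(Q_{\mathbf k}\Sigma_{\mathbf k}^* )$. $\mathscr L_+=\{\mathbf Q:\nu\Psi^{-1}+Q\ge0\text{ on }\mathbb T^d,\ \text{not identically zero}\}$, with boundary $\partial\mathscr L_+$ the set of those $\mathbf Q$ with $\Psi^{-1}+\frac1\nu Q$ positive semidefinite on $\mathbb T^d$ and singular somewhere. $J_\nu(\mathbf Q)=\langle\mathbf Q,\boldsymbol\Sigma\rangle+\frac{\nu}{\nu-1}\int_{\mathbb T^d}\operatorname{tr}\{[\Psi^{-1}(\Psi^{-1}+\frac1\nu Q)^{-1}]^{\nu-1}\}\mathrm d\mu$ (integral over the complement of the null set where the determinant vanishes). Feasibility Assumption: there is a Hermitian nonnegative definite matrix-valued measure $M_0$ with $\int e^{i\langle\mathbf k,\boldsymbol\theta\rangle}\mathrm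 dM_0=\Sigma_{\mathbf k}$ for all $\mathbf k\in\Lambda$, and a nonnegative scalar measure $\lambda$ with $\mathrm dM_0=M'_{0,\lambda}\mathrm d\lambda$, $M'_{0,\lambda}$ positive definite on an open ball $B$ with $\lambda(B)>0$. *)

theory Defs
  imports "HOL-Analysis.Analysis"
begin

text \<open>Conventions. The dimension d is CARD('d), the matrix size m is CARD('m).
  Frequencies k live in int^'d, angles theta in real^'d, m x m complex
  matrices are complex^'m^'m.\<close>

definition torus :: "(real^'d) set" where
  "torus = {\<theta>. \<forall>j. - pi < \<theta>$j \<and> \<theta>$j \<le> pi}"

definition kdot :: "int^'d \<Rightarrow> real^'d \<Rightarrow> real" where
  "kdot k \<theta> = (\<Sum>j\<in>UNIV. of_int (k$j) * \<theta>$j)"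

definition madj :: "complex^'m^'m \<Rightarrow> complex^'m^'m" where
  "madj A = (\<chi> i j. cnj (A$j$i))"

definition csmult :: "complex \<Rightarrow> complex^'m^'m \<Rightarrow> complex^'m^'m" where
  "csmult c A = (\<chi> i j. c * A$i$j)"

definition hermitian :: "complex^'m^'m \<Rightarrow> bool" where
  "hermitian A \<longleftrightarrow> madj A = A"

definition qform :: "complex^'m^'m \<Rightarrow> complex^'m \<Rightarrow> complex" where
  "qform A v = (\<Sum>i\<in>UNIV. cnj (v$i) * (A *v v)$i)"

definition psd :: "complex^'m^'m \<Rightarrow> bool" where
  "psd A \<longleftrightarrow> hermitian A \<and> (\<forall>v. 0 \<le> Re (qform A v))"

definition pd :: "complex^'m^'m \<Rightarrow> bool" where
  "pd A \<longleftrightarrow> hermitian A \<and> (\<forall>v. v \<noteq> 0 \<longrightarrow> 0 < Re (qform A v))"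

fun mpow :: "complex^'m^'m \<Rightarrow> nat \<Rightarrow> complex^'m^'m" where
  "mpow A 0 = mat 1"
| "mpow A (Suc n) = A ** mpow A n"

definition fams :: "(int^'d) set \<Rightarrow> (int^'d \<Rightarrow> complex^'m^'m) set" where
  "fams \<Lambda> = {Q. (\<forall>k. k \<notin> \<Lambda> \<longrightarrow> Q k = 0) \<and> (\<forall>k\<in>\<Lambda>. Q (-k) = madj (Q k))}"

definition Qeval :: "(int^'d) set \<Rightarrow> (int^'d \<Rightarrow> complex^'m^'m) \<Rightarrow> real^'d \<Rightarrow> complex^'m^'m" where
  "Qeval \<Lambda> Q \<theta> = (\<Sum>k\<in>\<Lambda>. csmult (cis (- kdot k \<theta>)) (Q k))"

text \<open>The pairing <Q,Sigma> = sum_k tr(Q_k Sigma_k^*), which is real for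
  families in fams Lambda; we take its real part.\<close>
definition pairing :: "(int^'d) set \<Rightarrow> (int^'d \<Rightarrow> complex^'m^'m) \<Rightarrow> (int^'d \<Rightarrow> complex^'m^'m) \<Rightarrow> real" where
  "pairing \<Lambda> Q S = Re (\<Sum>k\<in>\<Lambda>. trace (Q k ** madj (S k)))"

definition trig_poly :: "(int^'d) set \<Rightarrow> (int^'d \<Rightarrow> complex) \<Rightarrow> real^'d \<Rightarrow> complex" where
  "trig_poly A c \<theta> = (\<Sum>k\<in>A. c k * cis (kdot k \<theta>))"

definition rational_mfun :: "(real^'d \<Rightarrow> complex^'m^'m) \<Rightarrow> bool" where
  "rational_mfun \<Psi> \<longleftrightarrow> (\<forall>i j. \<exists>A B p q. finite A \<and> finite B \<and>
      (\<forall>\<theta>\<in>torus. trig_poly B q \<theta> \<noteq> 0) \<and>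
      (\<forall>\<theta>\<in>torus. \<Psi> \<theta> $ i $ j = trig_poly A p \<theta> / trig_poly B q \<theta>))"

definition bounded_coercive :: "(real^'d \<Rightarrow> complex^'m^'m) \<Rightarrow> bool" where
  "bounded_coercive \<Psi> \<longleftrightarrow> (\<exists>a b. 0 < a \<and> a < b \<and> (\<forall>\<theta>\<in>torus.
      psd (\<Psi> \<theta> - mat (complex_of_real a)) \<and> psd (mat (complex_of_real b) - \<Psi> \<theta>)))"

definition Lplus :: "(int^'d) set \<Rightarrow> (real^'d \<Rightarrow> complex^'m^'m) \<Rightarrow> nat \<Rightarrow> (int^'d \<Rightarrow> complex^'m^'m) set" where
  "Lplus \<Lambda> \<Psi> \<nu> = {Q \<in> fams \<Lambda>.
      (\<forall>\<theta>\<in>torus. psd (real \<nu> *\<^sub>R matrix_inv (\<Psi> \<theta>) + Qeval \<Lambda> Q \<theta>)) \<and>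
      (\<exists>\<theta>\<in>torus. real \<nu> *\<^sub>R matrix_inv (\<Psi> \<theta>) + Qeval \<Lambda> Q \<theta> \<noteq> 0)}"

definition Lplus_boundary :: "(int^'d) set \<Rightarrow> (real^'d \<Rightarrow> complex^'m^'m) \<Rightarrow> nat \<Rightarrow> (int^'d \<Rightarrow> complex^'m^'m) set" where
  "Lplus_boundary \<Lambda> \<Psi> \<nu> = {Q \<in> fams \<Lambda>.
      (\<forall>\<theta>\<in>torus. psd (matrix_inv (\<Psi> \<theta>) + (1 / real \<nu>) *\<^sub>R Qeval \<Lambda> Q \<theta>)) \<and>
      (\<exists>\<theta>\<in>torus. det (matrix_inv (\<Psi> \<theta>) + (1 / real \<nu>) *\<^sub>R Qeval \<Lambda> Q \<theta>) = 0)}"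

text \<open>Integrand of J_nu (set to 0 on the set where the determinant vanishes),
  including the normalisation (2 pi)^{-d} of d mu.\<close>
definition J_integrand :: "(int^'d) set \<Rightarrow> (real^'d \<Rightarrow> complex^'m^'m) \<Rightarrow> nat \<Rightarrow> (int^'d \<Rightarrow> complex^'m^'m) \<Rightarrow> real^'d \<Rightarrow> real" where
  "J_integrand \<Lambda> \<Psi> \<nu> Q \<theta> =
    (let P = matrix_inv (\<Psi> \<theta>) + (1 / real \<nu>) *\<^sub>R Qeval \<Lambda> Q \<theta> in
     if det P = 0 then 0
     else Re (trace (mpow (matrix_inv (\<Psi> \<theta>) ** matrix_inv P) (\<nu> - 1))) / (2 * pi) ^ CARD('d))"

text \<open>J_nu as an extended real (the integral term is a nonnegative integral).\<close>
definition J_nu :: "(int^'d) set \<Rightarrow> (int^'d \<Rightarrow> complex^'m^'m) \<Rightarrow> (real^'d \<Rightarrow> complex^'m^'m) \<Rightarrow> nat \<Rightarrow> (int^'d \<Rightarrow> complex^'m^'m) \<Rightarrow> ereal" where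
  "J_nu \<Lambda> \<Sigma> \<Psi> \<nu> Q = ereal (pairing \<Lambda> Q \<Sigma>) +
     ereal (real \<nu> / (real \<nu> - 1)) *
     enn2ereal (\<integral>\<^sup>+ \<theta>. ennreal (J_integrand \<Lambda> \<Psi> \<nu> Q \<theta>) * indicator torus \<theta> \<partial>lborel)"

definition feasible :: "(int^'d) set \<Rightarrow> (int^'d \<Rightarrow> complex^'m^'m) \<Rightarrow> bool" where
  "feasible \<Lambda> \<Sigma> \<longleftrightarrow> (\<exists>(lam :: (real^'d) measure) (M' :: real^'d \<Rightarrow> complex^'m^'m).
      sets lam = sets lborel \<and> finite_measure lam \<and> emeasure lam (UNIV - torus) = 0 \<and>
      (\<forall>\<theta>. psd (M' \<theta>)) \<and>
      (\<forall>k\<in>\<Lambda>. \<forall>i j. integrable lam (\<lambda>\<theta>. cis (kdot k \<theta>) * M' \<theta> $ i $ j) \<and>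
          (\<integral>\<theta>. cis (kdot k \<theta>) * M' \<theta> $ i $ j \<partial>lam) = \<Sigma> k $ i $ j) \<and>
      (\<exists>c r. 0 < r \<and> emeasure lam (ball c r \<inter> torus) > 0 \<and>
          (\<forall>\<theta>\<in>ball c r \<inter> torus. pd (M' \<theta>))))"

definition Kcone :: "(int^'d) set \<Rightarrow> (real^'d \<Rightarrow> complex^'m^'m) \<Rightarrow> nat \<Rightarrow> (int^'d \<Rightarrow> complex^'m^'m) \<Rightarrow> (int^'d \<Rightarrow> complex^'m^'m) set" where
  "Kcone \<Lambda> \<Psi> \<nu> Q0 = {SK \<in> fams \<Lambda>. \<forall>Q\<in>Lplus \<Lambda> \<Psi> \<nu>. pairing \<Lambda> SK (\<lambda>k. Q k - Q0 k) \<le> 0}"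

definition Cplus :: "(int^'d) set \<Rightarrow> (int^'d \<Rightarrow> complex^'m^'m) set" where
  "Cplus \<Lambda> = {S \<in> fams \<Lambda>. \<forall>Q\<in>fams \<Lambda>. Q \<noteq> (\<lambda>_. 0) \<and> (\<forall>\<theta>\<in>torus. psd (Qeval \<Lambda> Q \<theta>)) \<longrightarrow>
      0 < pairing \<Lambda> S Q}"

end

theory Submission
  imports Defs
begin


lemma sum_delta_r: "(\<Sum>j\<in>UNIV. f j * (if j = i then c else 0)) = f i * (c::complex)" for i :: "'n::finite"
proof -
  have "(\<lambda>j. f j * (if j = i then c else 0)) = (\<lambda>j. if j = i then f j * c else 0)" by auto
  then show ?thesis unfolding \<open>_ = _\<close> by simp
qed

lemma sum_delta_l: "(\<Sum>j\<in>UNIV. cnj (if j = i then c else 0) * f j) = cnj c * (f i::complex)" for i :: "'n::finite"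
proof -
  have "(\<lambda>j. cnj (if j = i then c else 0) * f j) = (\<lambda>j. if j = i then cnj c * f j else 0)" by auto
  then show ?thesis unfolding \<open>_ = _\<close> by simp
qed

lemma axis_nth': "axis i c $ j = (if j = i then c else 0)"
  by (simp add: axis_def)

lemma qform_axis: "qform A (axis i 1) = A$i$i"
  by (simp add: qform_def matrix_vector_mult_def axis_nth' sum_delta_r sum_delta_l)

lemma qform_two:
  assumes "i \<noteq> j"
  shows "qform A (axis i 1 + axis j c) = A$i$i + A$i$j * c + cnj c * A$j$i + cnj c * A$j$j * c"
proof -
  have m: "(A *v (axis i 1 + axis j c))$l = A$l$i + A$l$j * c" for l
    by (simp add: matrix_vector_mult_def distrib_left sum.distrib axis_nth' sum_delta_r)
  show ?thesis using assms
    by (simp add: qform_def m distrib_left distrib_right sum.distrib axis_nth' sum_delta_l)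
qed


lemma psd_diag: "psd A \<Longrightarrow> 0 \<le> Re (A$i$i)"
  unfolding psd_def by (metis qform_axis)

lemma psd_Re_trace: "psd A \<Longrightarrow> 0 \<le> Re (trace A)"
  by (simp add: trace_def psd_diag sum_nonneg)

lemma herm_entry: "hermitian A \<Longrightarrow> A$j$i = cnj (A$i$j)"
  unfolding hermitian_def madj_def by (metis complex_cnj_cnj vec_lambda_beta)

lemma psd_trace_zero:
  assumes "psd A" "Re (trace A) = 0"
  shows "A = 0"
proof -
  have h: "hermitian A" using assms(1) psd_def by blast
  have d: "Re (A$i$i) = 0" for i
  proof -
    have "(\<Sum>i\<in>UNIV. Re (A$i$i)) = 0" using assms(2) by (simp add: trace_def)
    then show ?thesis using sum_nonneg_eq_0_iff[of UNIV "\<lambda>i. Re (A$i$i)"] psd_diag[OF assms(1)] by auto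
  qed
  have d2: "A$i$i = 0" for i
    using herm_entry[OF h, of i i] d[of i] by (simp add: complex_eq_iff)
  have "A$i$j = 0" for i j
  proof (cases "i = j")
    case True then show ?thesis using d2 by simp
  next
    case False
    let ?c = "- cnj (A$i$j)"
    have "0 \<le> Re (qform A (axis i 1 + axis j ?c))" using assms(1) psd_def by blast
    also have "Re (qform A (axis i 1 + axis j ?c)) = - 2 * (Re (A$i$j) * Re (A$i$j) + Im (A$i$j) * Im (A$i$j))"
      using qform_two[OF False, of A ?c] d2 herm_entry[OF h, of j i]
      by (simp add: algebra_simps)
    finally have "Re (A$i$j) * Re (A$i$j) + Im (A$i$j) * Im (A$i$j) \<le> 0" by simp
    then have "Re (A$i$j) * Re (A$i$j) + Im (A$i$j) * Im (A$i$j) = 0"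
      using sum_squares_ge_zero[of "Re (A$i$j)" "Im (A$i$j)"] by linarith
    then have "Re (A$i$j) = 0 \<and> Im (A$i$j) = 0" by (simp add: sum_squares_eq_zero_iff)
    then show ?thesis by (simp add: complex_eq_iff)
  qed
  then show ?thesis by (simp add: vec_eq_iff)
qed

lemma psd_add: "psd A \<Longrightarrow> psd B \<Longrightarrow> psd (A + B)"
  unfolding psd_def hermitian_def qform_def
  by (auto simp: madj_def vec_eq_iff matrix_vector_mult_def sum.distrib distrib_left distrib_right
      intro!: add_nonneg_nonneg)


lemma cis_sum': "finite A \<Longrightarrow> cis (\<Sum>i\<in>A. f i) = (\<Prod>i\<in>A. cis (f i))"
  by (induction A rule: finite_induct) (auto simp: cis_mult[symmetric])

lemma root_ne1:
  fixes k :: int and N :: nat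
  assumes "0 < N" "\<bar>k\<bar> < int N" "k \<noteq> 0"
  shows "cis (2 * pi * k / N) \<noteq> 1"
proof
  assume "cis (2 * pi * k / N) = 1"
  then have "cos (2 * pi * k / N) = 1" by (metis cis.sel(1) one_complex.sel(1))
  then obtain n :: int where n: "2 * pi * k / N = n * 2 * pi" by (auto simp: cos_one_2pi_int)
  then have "real_of_int k = real_of_int n * N" using assms(1) by (simp add: field_simps)
  then have "k = n * int N" by (metis of_int_eq_iff of_int_mult of_int_of_nat_eq)
  then have a: "\<bar>k\<bar> = \<bar>n\<bar> * int N" by (simp add: abs_mult)
  have "n \<noteq> 0" using \<open>k = n * int N\<close> assms(3) by auto
  then have "1 \<le> \<bar>n\<bar>" by simp
  then have "1 * int N \<le> \<bar>n\<bar> * int N" by (rule mult_right_mono) simp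
  with a assms(2) show False by simp
qed

lemma sum1d:
  fixes k :: int and N :: nat
  assumes "0 < N" "\<bar>k\<bar> < int N"
  shows "(\<Sum>x<N. cis (k * (2 * pi * (real x + 1) / N - pi))) = (if k = 0 then of_nat N else 0)"
proof (cases "k = 0")
  case True then show ?thesis by simp
next
  case False
  define w where "w = cis (2 * pi * k / N)"
  define c where "c = cis (k * (2 * pi / N - pi))"
  have e: "cis (k * (2 * pi * (real x + 1) / N - pi)) = c * w ^ x" for x
  proof -
    have "c * w ^ x = cis (k * (2 * pi / N - pi) + real x * (2 * pi * k / N))"
      unfolding c_def w_def by (simp only: Complex.DeMoivre cis_mult)
    also have "\<dots> = cis (k * (2 * pi * (real x + 1) / N - pi))"
      using assms(1) by (rule_tac arg_cong[where f=cis]) (simp add: field_simps)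
    finally show ?thesis by simp
  qed
  have wN: "w ^ N = 1"
  proof -
    have "w ^ N = cis (real N * (2 * pi * k / N))" unfolding w_def by (rule Complex.DeMoivre)
    also have "real N * (2 * pi * k / N) = 2 * pi * real_of_int k" using assms(1) by simp
    also have "cis (2 * pi * real_of_int k) = 1" by (rule cis_multiple_2pi) simp
    finally show ?thesis .
  qed
  have "(\<Sum>x<N. c * w ^ x) = c * (\<Sum>x<N. w ^ x)" by (simp add: sum_distrib_left)
  also have "\<dots> = 0" using root_ne1[OF assms False] wN by (simp add: sum_gp_strict w_def)
  finally show ?thesis using False by (simp add: e)
qed

definition grid :: "nat \<Rightarrow> ('d \<Rightarrow> nat) \<Rightarrow> real^'d" where
  "grid N n = (\<chi> i. 2 * pi * (real (n i) + 1) / N - pi)"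

definition G :: "nat \<Rightarrow> ('d::finite \<Rightarrow> nat) set" where
  "G N = PiE UNIV (\<lambda>_. {..<N})"

lemma finite_G: "finite (G N)"
  unfolding G_def by (intro finite_PiE) auto

lemma grid_torus:
  assumes "0 < N" "n \<in> G N"
  shows "grid N n \<in> torus"
proof -
  have "- pi < 2 * pi * (real (n i) + 1) / N - pi \<and> 2 * pi * (real (n i) + 1) / N - pi \<le> pi" for i
  proof -
    have "n i < N" using assms(2) unfolding G_def by auto
    then have "real (n i) + 1 \<le> N" by linarith
    then have "2 * pi * (real (n i) + 1) \<le> 2 * pi * real N" by (intro mult_left_mono) auto
    then have "2 * pi * (real (n i) + 1) / N \<le> 2 * pi" using assms(1)
      by (simp add: pos_divide_le_eq)
    moreover have "0 < 2 * pi * (real (n i) + 1) / N" using assms(1) by simp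
    ultimately show ?thesis by linarith
  qed
  then show ?thesis unfolding torus_def grid_def by simp
qed

lemma kdot_diff: "kdot j t - kdot k t = kdot (j - k) t"
  by (simp add: kdot_def sum_subtractf algebra_simps)

lemma kdot_neg: "- kdot k t = kdot (- k) t"
  by (simp add: kdot_def sum_negf)

lemma orth:
  fixes k :: "int^'d"
  assumes "0 < N" "\<forall>i. \<bar>k$i\<bar> < int N"
  shows "(\<Sum>n\<in>G N. cis (kdot k (grid N n))) = (if k = 0 then of_nat N ^ CARD('d) else 0)"
proof -
  define f where "f i x = cis (k$i * (2 * pi * (real x + 1) / N - pi))" for i x
  have e: "cis (kdot k (grid N n)) = (\<Prod>i\<in>UNIV. f i (n i))" for n
    unfolding kdot_def grid_def f_def by (simp add: cis_sum')
  have "(\<Sum>n\<in>G N. cis (kdot k (grid N n))) = (\<Prod>i\<in>UNIV. \<Sum>x<N. f i x)"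
    unfolding e G_def by (rule prod_sum_PiE[symmetric]) auto
  also have "\<dots> = (\<Prod>i\<in>UNIV. (if k$i = 0 then of_nat N else 0))"
    unfolding f_def using sum1d[OF assms(1)] assms(2) by simp
  also have "\<dots> = (if k = 0 then of_nat N ^ CARD('d) else 0)"
  proof (cases "k = 0")
    case True then show ?thesis by simp
  next
    case False
    then obtain i where "k$i \<noteq> 0" by (auto simp: vec_eq_iff)
    then show ?thesis using False by (simp add: prod_zero_iff) (use \<open>k$i \<noteq> 0\<close> in blast)
  qed
  finally show ?thesis .
qed

lemma Qeval_entry: "Qeval \<Lambda> Q t $ a $ b = (\<Sum>k\<in>\<Lambda>. cis (- kdot k t) * Q k $ a $ b)"
  by (simp add: Qeval_def csmult_def)

lemma inversion:
  fixes j :: "int^'d"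
  assumes "finite \<Lambda>" "0 < N" "\<forall>k\<in>\<Lambda>. \<forall>i. \<bar>j$i - k$i\<bar> < int N"
  shows "(\<Sum>n\<in>G N. cis (kdot j (grid N n)) * Qeval \<Lambda> Q (grid N n) $ a $ b)
     = (if j \<in> \<Lambda> then of_nat N ^ CARD('d) * Q j $ a $ b else 0)"
proof -
  have "(\<Sum>n\<in>G N. cis (kdot j (grid N n)) * Qeval \<Lambda> Q (grid N n) $ a $ b)
     = (\<Sum>n\<in>G N. \<Sum>k\<in>\<Lambda>. Q k $ a $ b * cis (kdot (j - k) (grid N n)))"
    unfolding Qeval_entry sum_distrib_left
    by (intro sum.cong refl) (simp add: cis_mult kdot_diff[symmetric])
  also have "\<dots> = (\<Sum>k\<in>\<Lambda>. Q k $ a $ b * (\<Sum>n\<in>G N. cis (kdot (j - k) (grid N n))))"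
    by (subst sum.swap) (simp add: sum_distrib_left)
  also have "\<dots> = (\<Sum>k\<in>\<Lambda>. if k = j then Q k $ a $ b * of_nat N ^ CARD('d) else 0)"
  proof (intro sum.cong refl)
    fix k assume "k \<in> \<Lambda>"
    then have "\<forall>i. \<bar>(j - k)$i\<bar> < int N" using assms(3) by simp
    from orth[OF assms(2) this] show "Q k $ a $ b * (\<Sum>n\<in>G N. cis (kdot (j - k) (grid N n))) =
       (if k = j then Q k $ a $ b * of_nat N ^ CARD('d) else 0)" by auto
  qed
  also have "\<dots> = (if j \<in> \<Lambda> then of_nat N ^ CARD('d) * Q j $ a $ b else 0)"
    using assms(1) by (simp add: mult.commute)
  finally show ?thesis .
qed



lemma madj_add: "madj (A + B) = madj A + madj B"
  by (simp add: madj_def vec_eq_iff)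
lemma madj_diff: "madj (A - B) = madj A - madj B"
  by (simp add: madj_def vec_eq_iff)
lemma madj_neg: "madj (- A) = - madj A"
  by (simp add: madj_def vec_eq_iff)
lemma madj_scaleR: "madj (t *\<^sub>R A) = t *\<^sub>R madj A"
  by (simp add: madj_def vec_eq_iff complex_cnj_scaleR)
lemma madj_one: "madj (mat 1) = mat 1"
  by (simp add: madj_def vec_eq_iff mat_def)
lemma madj_zero: "madj 0 = 0"
  by (simp add: madj_def vec_eq_iff)

lemma Qeval_add: "Qeval \<Lambda> (\<lambda>k. P k + Q k) t = Qeval \<Lambda> P t + Qeval \<Lambda> Q t"
  by (simp add: vec_eq_iff Qeval_entry distrib_left sum.distrib)

lemma trace_madj: "Re (trace (madj A)) = Re (trace A)"
  by (simp add: trace_def madj_def)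

lemma cscale: "t *\<^sub>R (z::complex) = of_real t * z"
  by (simp add: scaleR_conv_of_real)

lemma trace_zero_c: "trace (0::complex^'m^'m) = 0"
  by (simp add: trace_def)

lemma pairing_lin:
  "pairing \<Lambda> (\<lambda>k. - A k + t *\<^sub>R B k) Q = - pairing \<Lambda> A Q + t * pairing \<Lambda> B Q"
proof -
  have "trace ((- A k + t *\<^sub>R B k) ** madj (Q k)) = - trace (A k ** madj (Q k)) + of_real t * trace (B k ** madj (Q k))" for k
    by (simp add: trace_def matrix_matrix_mult_def sum.distrib distrib_right
      sum_distrib_left sum_negf cscale mult.assoc left_diff_distrib sum_subtractf)
  then show ?thesis unfolding pairing_def
    by (simp add: sum_subtractf sum_distrib_left)
qed

lemma pairing_S0:
  assumes "finite \<Lambda>" "0 \<in> \<Lambda>"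
  shows "pairing \<Lambda> (\<lambda>k. if k = 0 then mat 1 else 0) Q = Re (trace (Q 0))"
proof -
  have "(\<lambda>k. trace ((if k = 0 then mat 1 else 0) ** madj (Q k))) = (\<lambda>k. if k = 0 then trace (madj (Q 0)) else 0)"
    by (auto simp: matrix_mul_lid trace_def)
  then show ?thesis using assms unfolding pairing_def \<open>_ = _\<close> by (simp add: trace_madj)
qed

lemma key_pos:
  fixes Q :: "int^'d \<Rightarrow> complex^'m^'m"
  assumes fin: "finite \<Lambda>" and z: "0 \<in> \<Lambda>" and Qf: "Q \<in> fams \<Lambda>" and nz: "Q \<noteq> (\<lambda>_. 0)"
    and ps: "\<forall>t\<in>torus. psd (Qeval \<Lambda> Q t)"
  shows "0 < Re (trace (Q 0))"
proof (rule ccontr)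
  assume neg: "\<not> 0 < Re (trace (Q 0))"
  define S where "S = nat (\<Sum>k\<in>\<Lambda>. \<Sum>i\<in>UNIV. \<bar>k$i\<bar>)"
  define N where "N = Suc (2 * S)"
  have N0: "0 < N" by (simp add: N_def)
  have bnd: "\<bar>k$i\<bar> \<le> int S" if "k \<in> \<Lambda>" for k i
  proof -
    have "\<bar>k$i\<bar> \<le> (\<Sum>i\<in>UNIV. \<bar>k$i\<bar>)" by (rule member_le_sum) auto
    also have "\<dots> \<le> (\<Sum>k\<in>\<Lambda>. \<Sum>i\<in>UNIV. \<bar>k$i\<bar>)"
      using that fin by (intro member_le_sum) (auto intro: sum_nonneg)
    moreover have "0 \<le> (\<Sum>k\<in>\<Lambda>. \<Sum>i\<in>UNIV. \<bar>k$i\<bar>)" by (intro sum_nonneg) auto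
    ultimately show ?thesis unfolding S_def by simp
  qed
  have diff: "\<forall>k\<in>\<Lambda>. \<forall>i. \<bar>j$i - k$i\<bar> < int N" if "j \<in> \<Lambda>" for j
  proof (intro ballI allI)
    fix k i assume "k \<in> \<Lambda>"
    have "\<bar>j$i - k$i\<bar> \<le> \<bar>j$i\<bar> + \<bar>k$i\<bar>" by (rule abs_triangle_ineq4)
    also have "\<dots> \<le> 2 * int S" using bnd[OF that, of i] bnd[OF \<open>k \<in> \<Lambda>\<close>, of i] by linarith
    finally show "\<bar>j$i - k$i\<bar> < int N" unfolding N_def by simp
  qed
  have k0: "kdot 0 t = 0" for t :: "real^'d" by (simp add: kdot_def)
  have inv0: "(\<Sum>n\<in>G N. Qeval \<Lambda> Q (grid N n) $ a $ a) = of_nat N ^ CARD('d) * Q 0 $ a $ a" for a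
    using inversion[OF fin N0 diff[OF z], of Q a a] z by (simp add: k0)
  have "(\<Sum>n\<in>G N. Re (trace (Qeval \<Lambda> Q (grid N n)))) = Re (\<Sum>a\<in>UNIV. \<Sum>n\<in>G N. Qeval \<Lambda> Q (grid N n) $ a $ a)"
    unfolding trace_def by (simp add: sum.swap[of _ "G N"])
  also have "\<dots> = real N ^ CARD('d) * Re (trace (Q 0))"
    unfolding inv0 trace_def by (simp add: sum_distrib_left)
  finally have eq: "(\<Sum>n\<in>G N. Re (trace (Qeval \<Lambda> Q (grid N n)))) = real N ^ CARD('d) * Re (trace (Q 0))" .
  have nn: "0 \<le> Re (trace (Qeval \<Lambda> Q (grid N n)))" if "n \<in> G N" for n
    using psd_Re_trace ps grid_torus[OF N0 that] by blast
  have "real N ^ CARD('d) * Re (trace (Q 0)) \<le> 0"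
    using neg N0 by (simp add: mult_nonneg_nonpos)
  then have "(\<Sum>n\<in>G N. Re (trace (Qeval \<Lambda> Q (grid N n)))) = 0"
  proof -
    have "0 \<le> (\<Sum>n\<in>G N. Re (trace (Qeval \<Lambda> Q (grid N n))))" by (rule sum_nonneg) (rule nn)
    then show ?thesis using eq \<open>real N ^ CARD('d) * Re (trace (Q 0)) \<le> 0\<close> by linarith
  qed
  then have "\<forall>n\<in>G N. Re (trace (Qeval \<Lambda> Q (grid N n))) = 0"
    using sum_nonneg_eq_0_iff[OF finite_G[of N], where f="\<lambda>n. Re (trace (Qeval \<Lambda> Q (grid N n)))"] nn by blast
  then have Z: "\<forall>n\<in>G N. Qeval \<Lambda> Q (grid N n) = 0"
    using psd_trace_zero ps grid_torus[OF N0] by blast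
  have "Q j = 0" for j
  proof (cases "j \<in> \<Lambda>")
    case True
    have "of_nat N ^ CARD('d) * Q j $ a $ b = 0" for a b
      using inversion[OF fin N0 diff[OF True], of Q a b] True Z by simp
    then show ?thesis using N0 by (simp add: vec_eq_iff)
  next
    case False then show ?thesis using Qf by (simp add: fams_def)
  qed
  then show False using nz by auto
qed

theorem lemma7p1:
  fixes \<Lambda> :: "(int^'d) set"
    and \<Sigma> SK Q0 :: "int^'d \<Rightarrow> complex^'m^'m"
    and \<Psi> :: "real^'d \<Rightarrow> complex^'m^'m"
    and \<nu> :: nat
  assumes "\<nu> \<ge> 2"
    and "finite \<Lambda>" and "0 \<in> \<Lambda>" and "\<forall>k\<in>\<Lambda>. - k \<in> \<Lambda>"
    and "\<Sigma> \<in> fams \<Lambda>"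
    and "rational_mfun \<Psi>" and "bounded_coercive \<Psi>"
    and "feasible \<Lambda> \<Sigma>"
    and "Q0 \<in> Lplus \<Lambda> \<Psi> \<nu>"
    and "\<forall>Q\<in>Lplus \<Lambda> \<Psi> \<nu>. J_nu \<Lambda> \<Sigma> \<Psi> \<nu> Q0 \<le> J_nu \<Lambda> \<Sigma> \<Psi> \<nu> Q"
    and "\<forall>Q\<in>Lplus \<Lambda> \<Psi> \<nu>. J_nu \<Lambda> \<Sigma> \<Psi> \<nu> Q = J_nu \<Lambda> \<Sigma> \<Psi> \<nu> Q0 \<longrightarrow> Q = Q0"
    and "Q0 \<in> Lplus_boundary \<Lambda> \<Psi> \<nu>"
    and "SK \<in> Kcone \<Lambda> \<Psi> \<nu> Q0"
  shows "(\<lambda>k. - SK k) \<in> closure (Cplus \<Lambda>)"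
  proof -
  note fin = assms(2) and z = assms(3) and sym = assms(4)
  define S0 :: "int^'d \<Rightarrow> complex^'m^'m" where "S0 = (\<lambda>k. if k = 0 then mat 1 else 0)"
  have SKf: "SK \<in> fams \<Lambda>" and SKc: "\<forall>Q\<in>Lplus \<Lambda> \<Psi> \<nu>. pairing \<Lambda> SK (\<lambda>k. Q k - Q0 k) \<le> 0"
    using assms(13) by (auto simp: Kcone_def)
  have Q0f: "Q0 \<in> fams \<Lambda>" and Q0p: "\<forall>t\<in>torus. psd (real \<nu> *\<^sub>R matrix_inv (\<Psi> t) + Qeval \<Lambda> Q0 t)"
    and Q0n: "\<exists>t\<in>torus. real \<nu> *\<^sub>R matrix_inv (\<Psi> t) + Qeval \<Lambda> Q0 t \<noteq> 0"
    using assms(9) by (auto simp: Lplus_def)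
  have F1: "pairing \<Lambda> SK Q \<le> 0" if Qf: "Q \<in> fams \<Lambda>" and Qp: "\<forall>t\<in>torus. psd (Qeval \<Lambda> Q t)" for Q
  proof -
    define Q' where "Q' = (\<lambda>k. Q0 k + Q k)"
    have "Q' \<in> fams \<Lambda>" using Qf Q0f by (auto simp: fams_def Q'_def madj_add)
    moreover have "\<forall>t\<in>torus. psd (real \<nu> *\<^sub>R matrix_inv (\<Psi> t) + Qeval \<Lambda> Q' t)"
      using Q0p Qp psd_add unfolding Q'_def Qeval_add by (metis add.assoc)
    moreover have "\<exists>t\<in>torus. real \<nu> *\<^sub>R matrix_inv (\<Psi> t) + Qeval \<Lambda> Q' t \<noteq> 0"
    proof -
      obtain t where t: "t \<in> torus" and A: "real \<nu> *\<^sub>R matrix_inv (\<Psi> t) + Qeval \<Lambda> Q0 t \<noteq> 0"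
        using Q0n by blast
      let ?A = "real \<nu> *\<^sub>R matrix_inv (\<Psi> t) + Qeval \<Lambda> Q0 t" and ?B = "Qeval \<Lambda> Q t"
      have "?A + ?B \<noteq> 0"
      proof
        assume s: "?A + ?B = 0"
        have "Re (trace ?A) + Re (trace ?B) = 0"
          using arg_cong[OF s, of "\<lambda>M. Re (trace M)"] by (simp add: trace_add trace_zero_c)
        moreover have "0 \<le> Re (trace ?A)" "0 \<le> Re (trace ?B)" using Q0p Qp t psd_Re_trace by auto
        ultimately have "Re (trace ?B) = 0" by linarith
        then have "?B = 0" using psd_trace_zero Qp t by blast
        then show False using s A by simp
      qed
      then show ?thesis using t unfolding Q'_def Qeval_add by (metis add.assoc)
    qed
    ultimately have "Q' \<in> Lplus \<Lambda> \<Psi> \<nu>" by (simp add: Lplus_def)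
    then have "pairing \<Lambda> SK (\<lambda>k. Q' k - Q0 k) \<le> 0" using SKc by blast
    moreover have "(\<lambda>k. Q' k - Q0 k) = Q" by (simp add: Q'_def)
    ultimately show ?thesis by simp
  qed
  define g :: "real \<Rightarrow> int^'d \<Rightarrow> complex^'m^'m" where "g = (\<lambda>s k. - SK k + s *\<^sub>R S0 k)"
  have gC: "g s \<in> Cplus \<Lambda>" if "0 < s" for s
  proof -
    have "g s \<in> fams \<Lambda>"
      using SKf z unfolding fams_def g_def S0_def
      by (auto simp: madj_add madj_diff madj_neg madj_scaleR madj_one madj_zero)
    moreover have "0 < pairing \<Lambda> (g s) Q"
      if "Q \<in> fams \<Lambda>" "Q \<noteq> (\<lambda>_. 0)" "\<forall>t\<in>torus. psd (Qeval \<Lambda> Q t)" for Q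
    proof -
      have "pairing \<Lambda> (g s) Q = - pairing \<Lambda> SK Q + s * Re (trace (Q 0))"
        unfolding g_def pairing_lin S0_def pairing_S0[OF fin z] ..
      moreover have "pairing \<Lambda> SK Q \<le> 0" using F1 that by blast
      moreover have "0 < Re (trace (Q 0))" using key_pos[OF fin z that] .
      moreover have "0 < s * Re (trace (Q 0))" using \<open>0 < s\<close> \<open>0 < Re (trace (Q 0))\<close> by simp
      ultimately show ?thesis by linarith
    qed
    ultimately show ?thesis by (simp add: Cplus_def)
  qed
  have cont: "continuous_on UNIV g"
    unfolding g_def by (intro continuous_on_coordinatewise_then_product continuous_intros)
  have "(g \<longlongrightarrow> g 0) (at 0)"
    using cont by (simp add: continuous_on_def)
  then have lim: "(g \<longlongrightarrow> (\<lambda>k. - SK k)) (at_right 0)"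
    by (auto simp: g_def intro: tendsto_mono[OF at_le])
  have ev: "\<forall>\<^sub>F s in at_right 0. g s \<in> closure (Cplus \<Lambda>)"
    using eventually_at_right_less[of "0::real"]
    by (rule eventually_mono) (use gC closure_subset in blast)
  show ?thesis
    by (rule Lim_in_closed_set[OF closed_closure ev _ lim]) simp
qed

end
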